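(* Let $n<\omega$ and let $\mathfrak D\in\mathsf{QEA}_\omega$ be atomic and such that for all $x\in\mathfrak D$ and all $k<\omega$, $\mathsf c_kx=\sum_{l\in\omega}\mathsf s^k_lx$. If $\mathfrak A\subseteq\mathfrak{Nr}_n\mathfrak D$ and $\mathfrak A\subseteq_c\mathfrak D$, then $\mathfrak A$ is completely representable.
   Context: $\mathsf{QEA}_\omega$ is the class of $\omega$-dimensional quasi-polyadic equality algebras: the signature of polyadic equality algebras restricted to cylindrifications on finitely many indices and substitutions $\mathsf s_\tau$ only for finite transformations $\tau:\omega\to\omega$ (moving finitely many points), with diagonals $\mathsf d_{ij}$, axiomatized by the corresponding restriction of the polyadic equality axioms. $\mathsf s^k_l$ is the substitution corresponding to the map sending $k$ to $l$ and fixing all other points. $\mathfrak{Nr}_n\mathfrak D$ has universe $\{x:\mathsf c_ix=x\ \forall i\in\omega\setminus n\}$ with operations indexed in $n$. $\mathfrak A\subseteq_c\mathfrak D$ means $\mathfrak A$ is a subalgebra and every $X\subseteq A$ with $\sum^{\mathfrak A}X=1$ has $\sum^{\mathfrak D}X=1$. Completely representable: there is an isomorphism $f$ from $\mathfrak A$ onto a set algebra (concrete operations) whose unit is a disjoint union of cartesian spaces ${}^nU_i$, with $f(\sum X)=\bigcup_{x\in X}f(x)$ whenever $\sum X$ exists. *)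

theory Defs
  imports "HOL-Library.FuncSet"
begin

text \<open>
  An omega-dimensional quasi-polyadic equality algebra is represented as a Boolean
  algebra on a whole type 'a (class boolean_algebra) together with
    cyl  :: nat set \<Rightarrow> 'a \<Rightarrow> 'a        (c_Gamma, meaningful for finite Gamma),
    sub  :: (nat \<Rightarrow> nat) \<Rightarrow> 'a \<Rightarrow> 'a  (s_tau, meaningful for finite transformations tau),
    diag :: nat \<Rightarrow> nat \<Rightarrow> 'a          (d_ij).
  The axioms are Halmos' polyadic equality axioms restricted to finite Gamma and
  finite transformations.
\<close>

definition finite_transf :: "(nat \<Rightarrow> nat) \<Rightarrow> bool" where
  "finite_transf \<tau> \<longleftrightarrow> finite {i. \<tau> i \<noteq> i}"

definition is_quantifier :: "('a::boolean_algebra \<Rightarrow> 'a) \<Rightarrow> bool" where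
  "is_quantifier c \<longleftrightarrow> c bot = bot \<and> (\<forall>x. x \<le> c x) \<and> (\<forall>x y. c (inf x (c y)) = inf (c x) (c y))"

definition bool_endo :: "('a::boolean_algebra \<Rightarrow> 'a) \<Rightarrow> bool" where
  "bool_endo h \<longleftrightarrow> h bot = bot \<and> h top = top \<and> (\<forall>x y. h (sup x y) = sup (h x) (h y))
     \<and> (\<forall>x y. h (inf x y) = inf (h x) (h y)) \<and> (\<forall>x. h (- x) = - h x)"

definition repl :: "nat \<Rightarrow> nat \<Rightarrow> nat \<Rightarrow> nat" where
  "repl k l = id(k := l)"

definition QEA_omega ::
  "(nat set \<Rightarrow> 'a::boolean_algebra \<Rightarrow> 'a) \<Rightarrow> ((nat \<Rightarrow> nat) \<Rightarrow> 'a \<Rightarrow> 'a) \<Rightarrow> (nat \<Rightarrow> nat \<Rightarrow> 'a) \<Rightarrow> bool" where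
  "QEA_omega cyl sub diag \<longleftrightarrow>
     (\<forall>x. cyl {} x = x)
   \<and> (\<forall>\<Gamma> \<Delta> x. finite \<Gamma> \<longrightarrow> finite \<Delta> \<longrightarrow> cyl (\<Gamma> \<union> \<Delta>) x = cyl \<Gamma> (cyl \<Delta> x))
   \<and> (\<forall>\<Gamma>. finite \<Gamma> \<longrightarrow> is_quantifier (cyl \<Gamma>))
   \<and> (\<forall>x. sub id x = x)
   \<and> (\<forall>\<sigma> \<tau> x. finite_transf \<sigma> \<longrightarrow> finite_transf \<tau> \<longrightarrow> sub (\<sigma> \<circ> \<tau>) x = sub \<sigma> (sub \<tau> x))
   \<and> (\<forall>\<tau>. finite_transf \<tau> \<longrightarrow> bool_endo (sub \<tau>))
   \<and> (\<forall>\<sigma> \<tau> \<Gamma> x. finite_transf \<sigma> \<longrightarrow> finite_transf \<tau> \<longrightarrow> finite \<Gamma> \<longrightarrow>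
        (\<forall>i. i \<notin> \<Gamma> \<longrightarrow> \<sigma> i = \<tau> i) \<longrightarrow> sub \<sigma> (cyl \<Gamma> x) = sub \<tau> (cyl \<Gamma> x))
   \<and> (\<forall>\<tau> \<Gamma> x. finite_transf \<tau> \<longrightarrow> finite \<Gamma> \<longrightarrow> inj_on \<tau> (\<tau> -` \<Gamma>) \<longrightarrow>
        cyl \<Gamma> (sub \<tau> x) = sub \<tau> (cyl (\<tau> -` \<Gamma>) x))
   \<and> (\<forall>\<tau> i j. finite_transf \<tau> \<longrightarrow> sub \<tau> (diag i j) = diag (\<tau> i) (\<tau> j))
   \<and> (\<forall>i. diag i i = top)
   \<and> (\<forall>i j x. inf x (diag i j) \<le> sub (repl i j) x)"

definition atom :: "'a::boolean_algebra \<Rightarrow> bool" where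
  "atom a \<longleftrightarrow> a \<noteq> bot \<and> (\<forall>y. y \<le> a \<longrightarrow> y = bot \<or> y = a)"

definition atomic :: "'a::boolean_algebra itself \<Rightarrow> bool" where
  "atomic _ \<longleftrightarrow> (\<forall>x::'a. x \<noteq> bot \<longrightarrow> (\<exists>a. atom a \<and> a \<le> x))"

definition is_sum_in :: "'a::order set \<Rightarrow> 'a set \<Rightarrow> 'a \<Rightarrow> bool" where
  "is_sum_in S X s \<longleftrightarrow> s \<in> S \<and> (\<forall>x\<in>X. x \<le> s) \<and> (\<forall>u\<in>S. (\<forall>x\<in>X. x \<le> u) \<longrightarrow> s \<le> u)"

definition ext_transf :: "nat \<Rightarrow> (nat \<Rightarrow> nat) \<Rightarrow> nat \<Rightarrow> nat" where
  "ext_transf n \<tau> = (\<lambda>j. if j < n then \<tau> j else j)"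

definition Nr :: "nat \<Rightarrow> (nat set \<Rightarrow> 'a \<Rightarrow> 'a) \<Rightarrow> 'a set" where
  "Nr n cyl = {x. \<forall>i. n \<le> i \<longrightarrow> cyl {i} x = x}"

definition subalg_Nr ::
  "nat \<Rightarrow> (nat set \<Rightarrow> 'a::boolean_algebra \<Rightarrow> 'a) \<Rightarrow> ((nat \<Rightarrow> nat) \<Rightarrow> 'a \<Rightarrow> 'a) \<Rightarrow> (nat \<Rightarrow> nat \<Rightarrow> 'a) \<Rightarrow> 'a set \<Rightarrow> bool" where
  "subalg_Nr n cyl sub diag A \<longleftrightarrow>
     A \<subseteq> Nr n cyl \<and> bot \<in> A \<and> top \<in> A
   \<and> (\<forall>x\<in>A. \<forall>y\<in>A. sup x y \<in> A \<and> inf x y \<in> A) \<and> (\<forall>x\<in>A. - x \<in> A)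
   \<and> (\<forall>\<Gamma> x. \<Gamma> \<subseteq> {..<n} \<longrightarrow> x \<in> A \<longrightarrow> cyl \<Gamma> x \<in> A)
   \<and> (\<forall>\<tau> x. (\<forall>j<n. \<tau> j < n) \<longrightarrow> x \<in> A \<longrightarrow> sub (ext_transf n \<tau>) x \<in> A)
   \<and> (\<forall>i j. i < n \<longrightarrow> j < n \<longrightarrow> diag i j \<in> A)"

definition complete_sub :: "'a::boolean_algebra set \<Rightarrow> bool" where
  "complete_sub A \<longleftrightarrow> (\<forall>X. X \<subseteq> A \<longrightarrow> is_sum_in A X top \<longrightarrow> is_sum_in UNIV X top)"

text \<open>Complete representation of the n-dimensional algebra A: an injective map into
  the powerset of the unit V = disjoint union (tagged by I) of the cartesian spaces
  ^n(U i), with concrete operations, carrying existing suprema in A to unions.\<close>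
definition complete_representation ::
  "nat \<Rightarrow> (nat set \<Rightarrow> 'a::boolean_algebra \<Rightarrow> 'a) \<Rightarrow> ((nat \<Rightarrow> nat) \<Rightarrow> 'a \<Rightarrow> 'a) \<Rightarrow> (nat \<Rightarrow> nat \<Rightarrow> 'a)
   \<Rightarrow> 'a set \<Rightarrow> 'i set \<Rightarrow> ('i \<Rightarrow> 'u set) \<Rightarrow> ('a \<Rightarrow> ('i \<times> (nat \<Rightarrow> 'u)) set) \<Rightarrow> bool" where
  "complete_representation n cyl sub diag A I U f \<longleftrightarrow>
     (let V = Sigma I (\<lambda>i. PiE {..<n} (\<lambda>_. U i)) in
        inj_on f A
      \<and> (\<forall>x\<in>A. f x \<subseteq> V)
      \<and> f bot = {} \<and> f top = V
      \<and> (\<forall>x\<in>A. \<forall>y\<in>A. f (sup x y) = f x \<union> f y \<and> f (inf x y) = f x \<inter> f y)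
      \<and> (\<forall>x\<in>A. f (- x) = V - f x)
      \<and> (\<forall>\<Gamma> x. \<Gamma> \<subseteq> {..<n} \<longrightarrow> x \<in> A \<longrightarrow>
           f (cyl \<Gamma> x) = {(i, s) \<in> V. \<exists>t. (i, t) \<in> f x \<and> (\<forall>j<n. j \<notin> \<Gamma> \<longrightarrow> t j = s j)})
      \<and> (\<forall>\<tau> x. (\<forall>j<n. \<tau> j < n) \<longrightarrow> x \<in> A \<longrightarrow>
           f (sub (ext_transf n \<tau>) x) = {(i, s) \<in> V. (i, restrict (s \<circ> \<tau>) {..<n}) \<in> f x})
      \<and> (\<forall>i j. i < n \<longrightarrow> j < n \<longrightarrow> f (diag i j) = {(k, s) \<in> V. s i = s j})
      \<and> (\<forall>X s. X \<subseteq> A \<longrightarrow> is_sum_in A X s \<longrightarrow> f s = \<Union> (f ` X)))"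

text \<open>Completely representable. The index set of the disjoint union is taken in 'a and
  the base sets in nat.\<close>
definition completely_representable ::
  "nat \<Rightarrow> (nat set \<Rightarrow> 'a::boolean_algebra \<Rightarrow> 'a) \<Rightarrow> ((nat \<Rightarrow> nat) \<Rightarrow> 'a \<Rightarrow> 'a) \<Rightarrow> (nat \<Rightarrow> nat \<Rightarrow> 'a)
   \<Rightarrow> 'a set \<Rightarrow> bool" where
  "completely_representable n cyl sub diag A \<longleftrightarrow>
     (\<exists>(I::'a set) (U::'a \<Rightarrow> nat set) f. complete_representation n cyl sub diag A I U f)"

end

theory Submission
  imports Defs
begin

lemma ft_id: "finite_transf id"
  unfolding finite_transf_def by simp

lemma ft_repl: "finite_transf (repl k l)"
  unfolding finite_transf_def repl_def
  by (rule finite_subset[of _ "{k}"]) auto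

lemma ft_comp: "finite_transf \<sigma> \<Longrightarrow> finite_transf \<tau> \<Longrightarrow> finite_transf (\<sigma> \<circ> \<tau>)"
  unfolding finite_transf_def
  by (rule finite_subset[of _ "{i. \<tau> i \<noteq> i} \<union> {i. \<sigma> i \<noteq> i}"]) auto

lemma ft_upd: "finite_transf \<sigma> \<Longrightarrow> finite_transf (\<sigma>(k:=a))"
  unfolding finite_transf_def
  by (rule finite_subset[of _ "insert k {i. \<sigma> i \<noteq> i}"]) auto

lemma ft_ext: "finite_transf (ext_transf n t)"
  unfolding finite_transf_def ext_transf_def
  by (rule finite_subset[of _ "{..<n}"]) auto

definition CA :: "('a::boolean_algebra \<Rightarrow> 'a) \<Rightarrow> bool" where
  "CA h \<longleftrightarrow> (\<forall>X s. is_sum_in UNIV X s \<longrightarrow> is_sum_in UNIV (h ` X) (h s))"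

lemma CA_comp: fixes g h :: "'a::boolean_algebra \<Rightarrow> 'a" shows "CA g \<Longrightarrow> CA h \<Longrightarrow> CA (g \<circ> h)"
  unfolding CA_def
proof (intro allI impI)
  fix X :: "'a set" and s :: 'a assume g: "\<forall>X s. is_sum_in UNIV X s \<longrightarrow> is_sum_in UNIV (g ` X) (g s)"
    and h: "\<forall>X s. is_sum_in UNIV X s \<longrightarrow> is_sum_in UNIV (h ` X) (h s)"
    and s: "is_sum_in UNIV X s"
  have "is_sum_in UNIV (g ` (h ` X)) (g (h s))" using g h s by blast
  then show "is_sum_in UNIV ((g \<circ> h) ` X) ((g \<circ> h) s)" by (simp add: image_comp)
qed

lemma CA_id: "CA (\<lambda>x. x)"
  unfolding CA_def by simp

lemma CA_inf: "CA (\<lambda>z. inf (e::'a::boolean_algebra) z)"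
  unfolding CA_def is_sum_in_def
proof (intro allI impI conjI ballI)
  fix X and s::'a
  assume H: "s \<in> UNIV \<and> (\<forall>x\<in>X. x \<le> s) \<and> (\<forall>u\<in>UNIV. (\<forall>x\<in>X. x \<le> u) \<longrightarrow> s \<le> u)"
  show "inf e s \<in> UNIV" by simp
  show "\<And>x. x \<in> inf e ` X \<Longrightarrow> x \<le> inf e s" using H by (auto intro: le_infI2)
  fix u assume u: "\<forall>x\<in>inf e ` X. x \<le> u"
  have "\<forall>x\<in>X. x \<le> sup u (- e)"
  proof
    fix x assume "x \<in> X"
    then have "inf e x \<le> u" using u by auto
    then show "x \<le> sup u (- e)"
      by (metis inf_commute shunt1 sup_commute)
  qed
  then have "s \<le> sup u (- e)" using H by auto
  then show "inf e s \<le> u"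
    by (metis inf_commute shunt1 sup_commute)
qed

lemma CA_iso:
  fixes h g :: "'a::boolean_algebra \<Rightarrow> 'a"
  assumes "mono h" "mono g" "\<And>x. g (h x) = x" "\<And>x. h (g x) = x"
  shows "CA h"
  unfolding CA_def is_sum_in_def
proof (intro allI impI conjI ballI)
  fix X :: "'a set" and s :: 'a
  assume H: "s \<in> UNIV \<and> (\<forall>x\<in>X. x \<le> s) \<and> (\<forall>u\<in>UNIV. (\<forall>x\<in>X. x \<le> u) \<longrightarrow> s \<le> u)"
  show "h s \<in> UNIV" by simp
  show "\<And>x. x \<in> h ` X \<Longrightarrow> x \<le> h s" using H assms(1) by (auto dest: monoD)
  fix u assume u: "\<forall>x\<in>h ` X. x \<le> u"
  have "\<forall>x\<in>X. x \<le> g u"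
  proof
    fix x assume "x \<in> X"
    then have "h x \<le> u" using u by auto
    then have "g (h x) \<le> g u" using assms(2) by (auto dest: monoD)
    then show "x \<le> g u" using assms(3) by simp
  qed
  then have "s \<le> g u" using H by auto
  then have "h s \<le> h (g u)" using assms(1) by (auto dest: monoD)
  then show "h s \<le> u" using assms(4) by simp
qed

lemma atom_inf_bot: assumes "atom d" "\<not> d \<le> a" shows "inf d a = bot"
proof -
  have "inf d a \<le> d" by simp
  then have "inf d a = bot \<or> inf d a = d" using assms(1) unfolding atom_def by blast
  moreover have "inf d a \<noteq> d" using assms(2) by (auto simp: le_iff_inf)
  ultimately show ?thesis by blast
qed

lemma atom_below_sum:
  assumes "is_sum_in UNIV Y s" "atom d" "d \<le> s"
  shows "\<exists>y\<in>Y. d \<le> y"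
proof (rule ccontr)
  assume "\<not> ?thesis"
  then have "\<forall>y\<in>Y. inf d y = bot"
    using assms(2) atom_inf_bot by blast
  then have "\<forall>y\<in>Y. y \<le> - d" by (simp add: inf_commute inf_shunt)
  then have "s \<le> - d" using assms(1) unfolding is_sum_in_def by auto
  then have "d \<le> - d" using assms(3) by (rule order_trans[rotated])
  then have "inf d d = bot" by (simp only: inf_shunt)
  then have "d = bot" by simp
  then show False using assms(2) unfolding atom_def by simp
qed

lemma atom_compl: assumes "atom d" shows "d \<le> - a \<longleftrightarrow> \<not> d \<le> a"
proof
  assume "d \<le> - a"
  show "\<not> d \<le> a"
  proof
    assume "d \<le> a"
    then have "d \<le> inf a (- a)" using \<open>d \<le> - a\<close> by (rule le_infI)
    then have "d = bot" by (simp add: bot_unique)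
    then show False using \<open>atom d\<close> unfolding atom_def by simp
  qed
next
  assume "\<not> d \<le> a"
  then have "inf d a = bot" using assms atom_inf_bot by blast
  then show "d \<le> - a" by (simp add: inf_shunt)
qed

lemma atom_sup: assumes "atom d" shows "d \<le> sup a b \<longleftrightarrow> d \<le> a \<or> d \<le> b"
proof (rule iffI)
  assume H: "d \<le> sup a b"
  show "d \<le> a \<or> d \<le> b"
  proof (cases "d \<le> a")
    case False
    then have "d \<le> - a" using assms atom_compl by blast
    then have "d \<le> inf (- a) (sup a b)" using H by (rule le_infI)
    also have "inf (- a) (sup a b) \<le> b" by (simp add: inf_sup_distrib1)
    finally show ?thesis by simp
  qed simp
next
  assume "d \<le> a \<or> d \<le> b"
  then show "d \<le> sup a b" by (auto intro: le_supI1 le_supI2)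
qed

locale qea =
  fixes cyl :: "nat set \<Rightarrow> 'a::boolean_algebra \<Rightarrow> 'a"
    and sub :: "(nat \<Rightarrow> nat) \<Rightarrow> 'a \<Rightarrow> 'a"
    and diag :: "nat \<Rightarrow> nat \<Rightarrow> 'a"
  assumes Q: "QEA_omega cyl sub diag"
begin

lemmas QE = Q[unfolded QEA_omega_def]
lemmas Q1 = QE[THEN conjunct1]
lemmas Q2 = QE[THEN conjunct2, THEN conjunct1]
lemmas Q3 = QE[THEN conjunct2, THEN conjunct2, THEN conjunct1]
lemmas Q4 = QE[THEN conjunct2, THEN conjunct2, THEN conjunct2, THEN conjunct1]
lemmas Q5 = QE[THEN conjunct2, THEN conjunct2, THEN conjunct2, THEN conjunct2, THEN conjunct1]
lemmas Q6 = QE[THEN conjunct2, THEN conjunct2, THEN conjunct2, THEN conjunct2, THEN conjunct2, THEN conjunct1]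
lemmas Q7 = QE[THEN conjunct2, THEN conjunct2, THEN conjunct2, THEN conjunct2, THEN conjunct2, THEN conjunct2, THEN conjunct1]
lemmas Q8 = QE[THEN conjunct2, THEN conjunct2, THEN conjunct2, THEN conjunct2, THEN conjunct2, THEN conjunct2, THEN conjunct2, THEN conjunct1]
lemmas Q9 = QE[THEN conjunct2, THEN conjunct2, THEN conjunct2, THEN conjunct2, THEN conjunct2, THEN conjunct2, THEN conjunct2, THEN conjunct2, THEN conjunct1]
lemmas Q10 = QE[THEN conjunct2, THEN conjunct2, THEN conjunct2, THEN conjunct2, THEN conjunct2, THEN conjunct2, THEN conjunct2, THEN conjunct2, THEN conjunct2, THEN conjunct1]
lemmas Q11 = QE[THEN conjunct2, THEN conjunct2, THEN conjunct2, THEN conjunct2, THEN conjunct2, THEN conjunct2, THEN conjunct2, THEN conjunct2, THEN conjunct2, THEN conjunct2]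

lemma cyl_empty: "cyl {} x = x" using Q1 by blast
lemma cyl_union: "finite \<Gamma> \<Longrightarrow> finite \<Delta> \<Longrightarrow> cyl (\<Gamma> \<union> \<Delta>) x = cyl \<Gamma> (cyl \<Delta> x)"
  using Q2 by blast
lemma cyl_quant: "finite \<Gamma> \<Longrightarrow> is_quantifier (cyl \<Gamma>)"
  using Q3 by blast
lemma sub_id: "sub id x = x" using Q4 by blast
lemma sub_comp: "finite_transf \<sigma> \<Longrightarrow> finite_transf \<tau> \<Longrightarrow> sub (\<sigma> \<circ> \<tau>) x = sub \<sigma> (sub \<tau> x)"
  using Q5 by blast
lemma sub_endo: "finite_transf \<tau> \<Longrightarrow> bool_endo (sub \<tau>)"
  using Q6 by blast
lemma sub_agree: "finite_transf \<sigma> \<Longrightarrow> finite_transf \<tau> \<Longrightarrow> finite \<Gamma> \<Longrightarrow>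
        (\<And>i. i \<notin> \<Gamma> \<Longrightarrow> \<sigma> i = \<tau> i) \<Longrightarrow> sub \<sigma> (cyl \<Gamma> x) = sub \<tau> (cyl \<Gamma> x)"
  using Q7 by blast
lemma cyl_sub: "finite_transf \<tau> \<Longrightarrow> finite \<Gamma> \<Longrightarrow> inj_on \<tau> (\<tau> -` \<Gamma>) \<Longrightarrow>
        cyl \<Gamma> (sub \<tau> x) = sub \<tau> (cyl (\<tau> -` \<Gamma>) x)"
  using Q8 by blast
lemma sub_diag: "finite_transf \<tau> \<Longrightarrow> sub \<tau> (diag i j) = diag (\<tau> i) (\<tau> j)"
  using Q9 by blast
lemma diag_refl: "diag i i = top" using Q10 by blast
lemma diag_sub: "inf x (diag i j) \<le> sub (repl i j) x" using Q11 by blast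
lemma sub_bot: "finite_transf \<tau> \<Longrightarrow> sub \<tau> bot = bot"
  using sub_endo unfolding bool_endo_def by blast
lemma sub_top: "finite_transf \<tau> \<Longrightarrow> sub \<tau> top = top"
  using sub_endo unfolding bool_endo_def by blast
lemma sub_sup: "finite_transf \<tau> \<Longrightarrow> sub \<tau> (sup x y) = sup (sub \<tau> x) (sub \<tau> y)"
  using sub_endo unfolding bool_endo_def by blast
lemma sub_inf: "finite_transf \<tau> \<Longrightarrow> sub \<tau> (inf x y) = inf (sub \<tau> x) (sub \<tau> y)"
  using sub_endo unfolding bool_endo_def by blast
lemma sub_compl: "finite_transf \<tau> \<Longrightarrow> sub \<tau> (- x) = - sub \<tau> x"
  using sub_endo unfolding bool_endo_def by blast
lemma sub_mono: "finite_transf \<tau> \<Longrightarrow> x \<le> y \<Longrightarrow> sub \<tau> x \<le> sub \<tau> y"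
  by (metis sub_inf inf.absorb_iff1)

lemma cyl_bot: "finite \<Gamma> \<Longrightarrow> cyl \<Gamma> bot = bot"
  using cyl_quant unfolding is_quantifier_def by blast
lemma cyl_ext: "finite \<Gamma> \<Longrightarrow> x \<le> cyl \<Gamma> x"
  using cyl_quant unfolding is_quantifier_def by blast
lemma cyl_inf_cyl: "finite \<Gamma> \<Longrightarrow> cyl \<Gamma> (inf x (cyl \<Gamma> y)) = inf (cyl \<Gamma> x) (cyl \<Gamma> y)"
  using cyl_quant unfolding is_quantifier_def by blast
lemma cyl_mono: assumes "finite \<Gamma>" "x \<le> y" shows "cyl \<Gamma> x \<le> cyl \<Gamma> y"
proof -
  have "x = inf x (cyl \<Gamma> y)" using assms cyl_ext[of \<Gamma> y] by (simp add: inf.absorb1 order_trans)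
  then have "cyl \<Gamma> x = inf (cyl \<Gamma> x) (cyl \<Gamma> y)" using cyl_inf_cyl[OF assms(1)] by metis
  then show ?thesis by (metis inf.cobounded2)
qed
lemma cyl_compl_cyl: assumes "finite \<Gamma>" shows "cyl \<Gamma> (- cyl \<Gamma> x) = - cyl \<Gamma> x"
proof -
  have "inf (cyl \<Gamma> (- cyl \<Gamma> x)) (cyl \<Gamma> x) = cyl \<Gamma> (inf (- cyl \<Gamma> x) (cyl \<Gamma> x))"
    using cyl_inf_cyl[OF assms] by metis
  also have "\<dots> = bot" using cyl_bot[OF assms] by simp
  finally have "cyl \<Gamma> (- cyl \<Gamma> x) \<le> - cyl \<Gamma> x" by (simp add: inf_shunt)
  then show ?thesis using cyl_ext[OF assms] by (simp add: antisym)
qed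
lemma cyl_conj1: assumes "finite \<Gamma>" "inf (cyl \<Gamma> x) y = bot" shows "inf x (cyl \<Gamma> y) = bot"
proof -
  have "y \<le> - cyl \<Gamma> x" using assms(2) by (simp add: inf_shunt inf_commute)
  then have "cyl \<Gamma> y \<le> - cyl \<Gamma> x" using cyl_mono[OF assms(1)] cyl_compl_cyl[OF assms(1)] by metis
  then have "cyl \<Gamma> y \<le> - x" using cyl_ext[OF assms(1), of x] by (meson compl_mono order_trans)
  then have "inf (cyl \<Gamma> y) x = bot" by (simp add: inf_shunt)
  then show ?thesis by (simp add: inf_commute)
qed
lemma cyl_conj: "finite \<Gamma> \<Longrightarrow> inf (cyl \<Gamma> x) y = bot \<longleftrightarrow> inf x (cyl \<Gamma> y) = bot"
  using cyl_conj1[of \<Gamma> x y] cyl_conj1[of \<Gamma> y x] by (metis inf_commute)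

lemma CA_cyl: assumes "finite \<Gamma>" shows "CA (cyl \<Gamma>)"
  unfolding CA_def is_sum_in_def
proof (intro allI impI conjI ballI)
  fix X :: "'a set" and s :: 'a
  assume H: "s \<in> UNIV \<and> (\<forall>x\<in>X. x \<le> s) \<and> (\<forall>u\<in>UNIV. (\<forall>x\<in>X. x \<le> u) \<longrightarrow> s \<le> u)"
  show "cyl \<Gamma> s \<in> UNIV" by simp
  show "\<And>x. x \<in> cyl \<Gamma> ` X \<Longrightarrow> x \<le> cyl \<Gamma> s" using H cyl_mono[OF assms] by auto
  fix u assume u: "\<forall>x\<in>cyl \<Gamma> ` X. x \<le> u"
  have "\<forall>x\<in>X. x \<le> - cyl \<Gamma> (- u)"
  proof
    fix x assume "x \<in> X"
    then have "inf (cyl \<Gamma> x) (- u) = bot" using u by (simp add: inf_shunt)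
    then have "inf x (cyl \<Gamma> (- u)) = bot" using cyl_conj[OF assms] by blast
    then show "x \<le> - cyl \<Gamma> (- u)" by (simp add: inf_shunt)
  qed
  then have "s \<le> - cyl \<Gamma> (- u)" using H by auto
  then have "inf s (cyl \<Gamma> (- u)) = bot" by (simp add: inf_shunt)
  then have "inf (cyl \<Gamma> s) (- u) = bot" using cyl_conj[OF assms] by blast
  then show "cyl \<Gamma> s \<le> u" by (simp add: inf_shunt)
qed

lemma diag_sym: "diag i j \<le> diag j i"
proof (cases "i = j")
  case False
  have "inf (- diag j i) (diag i j) \<le> sub (repl i j) (- diag j i)" by (rule diag_sub)
  also have "\<dots> = - diag j j" using sub_compl[OF ft_repl] sub_diag[OF ft_repl] False
    by (simp add: repl_def)
  also have "\<dots> = bot" by (simp add: diag_refl)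
  finally have "inf (diag i j) (- diag j i) = bot" by (simp add: inf_commute bot_unique)
  then show ?thesis by (simp add: inf_shunt)
qed simp

lemma diag_sym_eq: "diag i j = diag j i"
  using diag_sym by (simp add: antisym)

lemma diag_trans: "inf (diag i j) (diag j k) \<le> diag i k"
proof (cases "j = k")
  case False
  have "inf (diag j k) (diag j i) \<le> sub (repl j i) (diag j k)" by (rule diag_sub)
  also have "\<dots> = diag i k" using sub_diag[OF ft_repl] False by (simp add: repl_def)
  finally show ?thesis by (simp add: diag_sym_eq inf_commute)
qed simp

lemma cyl_sub_repl: assumes "m \<noteq> a" shows "cyl {m} (sub (repl m a) y) = sub (repl m a) y"
proof -
  have pre: "repl m a -` {m} = {}" using assms by (auto simp: repl_def split: if_splits)
  have "cyl {m} (sub (repl m a) y) = sub (repl m a) (cyl (repl m a -` {m}) y)"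
    by (rule cyl_sub) (auto simp: ft_repl pre)
  then show ?thesis by (simp add: pre cyl_empty)
qed

lemma cyl_diag_fresh: assumes "m \<noteq> a" "m \<noteq> b" shows "cyl {m} (diag a b) = diag a b"
proof -
  have "diag a b = sub (repl m a) (diag m b)"
    using sub_diag[OF ft_repl] assms by (simp add: repl_def)
  then show ?thesis using cyl_sub_repl[OF assms(1)] by metis
qed

lemma sub_repl_eq: assumes "m \<noteq> a" shows "sub (repl m a) y = cyl {m} (inf (diag m a) y)"
proof (rule antisym)
  let ?w = "cyl {m} (inf (diag m a) y)"
  have cw: "cyl {m} (- ?w) = - ?w" by (simp add: cyl_compl_cyl)
  have "sub (repl m a) (- ?w) = sub id (- ?w)"
    using sub_agree[OF ft_repl ft_id, where \<Gamma>="{m}" and x="- ?w"] cw by (simp add: repl_def)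
  then have sw: "sub (repl m a) (- ?w) = - ?w" by (simp add: sub_id)
  have "inf (diag m a) y \<le> ?w" by (simp add: cyl_ext)
  then have "inf (inf (diag m a) y) (- ?w) = bot" by (simp add: inf_shunt)
  then have "inf (inf y (- ?w)) (diag m a) = bot" by (simp add: ac_simps)
  then have "inf y (- ?w) \<le> - diag m a" by (simp add: inf_shunt)
  then have "sub (repl m a) (inf y (- ?w)) \<le> sub (repl m a) (- diag m a)" by (rule sub_mono[OF ft_repl])
  also have "\<dots> = bot" using sub_compl[OF ft_repl] sub_diag[OF ft_repl] by (simp add: repl_def diag_refl)
  finally have "inf (sub (repl m a) y) (- ?w) = bot" using sub_inf[OF ft_repl] sw by (simp add: bot_unique)
  then show "sub (repl m a) y \<le> ?w" by (simp add: inf_shunt)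
next
  have "inf y (diag m a) \<le> sub (repl m a) y" by (rule diag_sub)
  then have "cyl {m} (inf (diag m a) y) \<le> cyl {m} (sub (repl m a) y)" by (simp add: cyl_mono inf_commute)
  then show "cyl {m} (inf (diag m a) y) \<le> sub (repl m a) y" using cyl_sub_repl[OF assms] by simp
qed

lemma CA_repl: assumes "m \<noteq> a" shows "CA (sub (repl m a))"
proof -
  have "sub (repl m a) = cyl {m} \<circ> (\<lambda>z. inf (diag m a) z)" using sub_repl_eq[OF assms] by auto
  then show ?thesis using CA_comp[OF CA_cyl CA_inf] by simp
qed

lemma cyl_inf_closed: assumes "finite \<Gamma>" "cyl \<Gamma> q = q" shows "inf (cyl \<Gamma> p) q = cyl \<Gamma> (inf p q)"
  using cyl_inf_cyl[OF assms(1), of p q] assms(2) by simp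

lemma diag_repl_move: assumes "m \<noteq> a" "m \<noteq> b"
  shows "inf (diag a b) (sub (repl m a) y) \<le> sub (repl m b) y"
proof -
  have "inf (diag a b) (sub (repl m a) y) = inf (cyl {m} (inf (diag m a) y)) (diag a b)"
    using sub_repl_eq[OF assms(1)] by (simp add: inf_commute)
  also have "\<dots> = cyl {m} (inf (inf (diag m a) y) (diag a b))"
    using cyl_inf_closed[of "{m}" "diag a b"] cyl_diag_fresh[OF assms] by simp
  also have "\<dots> \<le> cyl {m} (inf (diag m b) y)"
  proof (rule cyl_mono)
    have "inf (diag m a) (diag a b) \<le> diag m b" by (rule diag_trans)
    then show "inf (inf (diag m a) y) (diag a b) \<le> inf (diag m b) y"
      by (metis inf.cobounded1 inf.cobounded2 inf_mono le_inf_iff inf_commute inf_left_commute order_refl)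
  qed simp
  also have "\<dots> = sub (repl m b) y" using sub_repl_eq[OF assms(2)] by simp
  finally show ?thesis .
qed

end

context qea
begin

lemma CA_sub: "finite_transf \<sigma> \<Longrightarrow> CA (sub \<sigma>)"
proof (induction "card {i. \<sigma> i \<noteq> i}" arbitrary: \<sigma> rule: less_induct)
  case less
  let ?S = "{i. \<sigma> i \<noteq> i}"
  have finS: "finite ?S" using less.prems unfolding finite_transf_def .
  show ?case
  proof (cases "inj \<sigma>")
    case True
    have into: "\<sigma> ` ?S \<subseteq> ?S"
    proof
      fix y assume "y \<in> \<sigma> ` ?S"
      then obtain i where i: "i \<in> ?S" "y = \<sigma> i" by blast
      show "y \<in> ?S"
      proof (rule ccontr)
        assume "y \<notin> ?S"
        then have "\<sigma> (\<sigma> i) = \<sigma> i" using i by simp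
        then have "\<sigma> i = i" using True by (simp add: inj_eq)
        then show False using i by simp
      qed
    qed
    have eqS: "\<sigma> ` ?S = ?S" using endo_inj_surj[OF finS into] True by (simp add: inj_on_subset)
    have surj: "surj \<sigma>"
    proof -
      have "y \<in> range \<sigma>" for y
      proof (cases "y \<in> ?S")
        case True then show ?thesis using eqS by blast
      next
        case False then have "\<sigma> y = y" by simp
        then show ?thesis using rangeI[of \<sigma> y] by simp
      qed
      then show ?thesis by blast
    qed
    let ?g = "inv \<sigma>"
    have gs: "?g \<circ> \<sigma> = id" using True by simp
    have sg: "\<sigma> \<circ> ?g = id" using surj by (simp add: fun_eq_iff surj_f_inv_f)
    have ftg: "finite_transf ?g"
      unfolding finite_transf_def
    proof (rule finite_subset[OF _ finS])
      show "{i. ?g i \<noteq> i} \<subseteq> ?S"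
      proof
        fix i assume "i \<in> {i. ?g i \<noteq> i}"
        then have "?g i \<noteq> i" by simp
        show "i \<in> ?S"
        proof (rule ccontr)
          assume "i \<notin> ?S"
          then have "\<sigma> i = i" by simp
          have "?g (\<sigma> i) = i" by (rule inv_f_f[OF True])
          then have "?g i = i" using \<open>\<sigma> i = i\<close> by simp
          then show False using \<open>?g i \<noteq> i\<close> by simp
        qed
      qed
    qed
    show ?thesis
    proof (rule CA_iso[where g = "sub ?g"])
      show "mono (sub \<sigma>)" by (rule monoI, rule sub_mono[OF less.prems])
      show "mono (sub ?g)" by (rule monoI, rule sub_mono[OF ftg])
      show "sub ?g (sub \<sigma> x) = x" for x
        using sub_comp[OF ftg less.prems, of x] gs by (simp add: sub_id)
      show "sub \<sigma> (sub ?g x) = x" for x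
        using sub_comp[OF less.prems ftg, of x] sg by (simp add: sub_id)
    qed
  next
    case False
    then obtain k0 j0 where kj: "k0 \<noteq> j0" "\<sigma> k0 = \<sigma> j0" by (auto simp: inj_def)
    obtain k j where k: "k \<noteq> j" "\<sigma> k = \<sigma> j" "\<sigma> k \<noteq> k"
    proof (cases "\<sigma> k0 = k0")
      case True
      then have "\<sigma> j0 \<noteq> j0" using kj by simp
      then show ?thesis using that[of j0 k0] kj by simp
    next
      case False
      then show ?thesis using that[of k0 j0] kj by simp
    qed
    let ?s1 = "\<sigma>(k := k)"
    have dec: "\<sigma> = ?s1 \<circ> repl k j"
    proof (rule ext)
      fix i show "\<sigma> i = (?s1 \<circ> repl k j) i"
      proof (cases "i = k")
        case True then show ?thesis using k(1,2) by (simp add: repl_def)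
      next
        case False then show ?thesis by (simp add: repl_def)
      qed
    qed
    have ft1: "finite_transf ?s1" using ft_upd[OF less.prems] .
    have e1: "{i. ?s1 i \<noteq> i} = ?S - {k}" by auto
    have "k \<in> ?S" using k(3) by simp
    then have "{i. ?s1 i \<noteq> i} < ?S" unfolding e1 by blast
    then have "card {i. ?s1 i \<noteq> i} < card ?S" using finS by (rule psubset_card_mono[rotated])
    then have "CA (sub ?s1)" by (rule less.hyps[OF _ ft1])
    moreover have "CA (sub (repl k j))" using CA_repl k(1) by blast
    ultimately have "CA (sub ?s1 \<circ> sub (repl k j))" by (rule CA_comp)
    moreover have "sub \<sigma> = sub ?s1 \<circ> sub (repl k j)"
      proof
      fix x
      have "sub \<sigma> x = sub (?s1 \<circ> repl k j) x" using dec by (rule arg_cong[where f="\<lambda>f. sub f x"])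
      also have "\<dots> = (sub ?s1 \<circ> sub (repl k j)) x" by (simp add: sub_comp[OF ft1 ft_repl])
      finally show "sub \<sigma> x = (sub ?s1 \<circ> sub (repl k j)) x" .
    qed
    ultimately show ?thesis by simp
  qed
qed

lemma cyl_fin_Nr:
  assumes "x \<in> Nr n cyl" "finite F" "F \<inter> {..<n} = {}"
  shows "cyl F x = x"
  using assms(2,3)
proof (induction F rule: finite_induct)
  case empty then show ?case by (simp add: cyl_empty)
next
  case (insert i F)
  have "i \<ge> n" using insert.prems by auto
  have "cyl (insert i F) x = cyl ({i} \<union> F) x" by simp
  also have "\<dots> = cyl {i} (cyl F x)" using insert.hyps cyl_union[of "{i}" F x] by simp
  also have "\<dots> = cyl {i} x" using insert by auto
  also have "\<dots> = x" using assms(1) \<open>i \<ge> n\<close> unfolding Nr_def by blast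
  finally show ?case .
qed

lemma sub_Nr_agree:
  assumes "x \<in> Nr n cyl" "finite_transf \<sigma>1" "finite_transf \<sigma>2" "\<And>j. j < n \<Longrightarrow> \<sigma>1 j = \<sigma>2 j"
  shows "sub \<sigma>1 x = sub \<sigma>2 x"
proof -
  let ?F = "{i. \<sigma>1 i \<noteq> \<sigma>2 i}"
  have finF: "finite ?F"
    using assms(2,3) unfolding finite_transf_def
    by (rule finite_subset[rotated, OF finite_UnI]) auto
  have "?F \<inter> {..<n} = {}" using assms(4) by auto
  then have cx: "cyl ?F x = x" using cyl_fin_Nr[OF assms(1) finF] by simp
  have "sub \<sigma>1 (cyl ?F x) = sub \<sigma>2 (cyl ?F x)"
    by (rule sub_agree[OF assms(2,3) finF]) auto
  then show ?thesis using cx by simp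
qed

lemma ext_upd: "k < n \<Longrightarrow> ext_transf n (t(k:=a)) = (ext_transf n t)(k:=a)"
  by (auto simp: ext_transf_def fun_eq_iff)

lemma sub_split_fresh:
  assumes "w \<in> Nr n cyl" "k < n" "m \<ge> n" "m \<notin> t ` {..<n}"
  shows "sub (ext_transf n (t(k:=a))) w = sub (repl m a) (sub (ext_transf n (t(k:=m))) w)"
proof -
  have "sub (repl m a) (sub (ext_transf n (t(k:=m))) w) = sub (repl m a \<circ> ext_transf n (t(k:=m))) w"
    by (simp add: sub_comp ft_repl ft_ext)
  also have "\<dots> = sub (ext_transf n (t(k:=a))) w"
  proof (rule sub_Nr_agree[OF assms(1) ft_comp[OF ft_repl ft_ext] ft_ext])
    fix j assume "j < n"
    then show "(repl m a \<circ> ext_transf n (t(k := m))) j = ext_transf n (t(k := a)) j"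
      using assms(4) by (auto simp: ext_transf_def repl_def)
  qed
  finally show ?thesis by simp
qed

lemma fresh_nat: "finite (S::nat set) \<Longrightarrow> \<exists>m. m \<notin> S"
  using ex_new_if_finite[OF infinite_UNIV_nat] by blast

lemma diag_coord:
  assumes "w \<in> Nr n cyl" "k < n" "d \<le> diag a b" "d \<le> sub (ext_transf n (t(k:=a))) w"
  shows "d \<le> sub (ext_transf n (t(k:=b))) w"
proof -
  obtain m where m: "m \<notin> {..<n} \<union> t ` {..<n} \<union> {a, b}"
    using fresh_nat[of "{..<n} \<union> t ` {..<n} \<union> {a, b}"] by auto
  have mn: "m \<ge> n" "m \<notin> t ` {..<n}" "m \<noteq> a" "m \<noteq> b" using m by auto
  let ?y = "sub (ext_transf n (t(k:=m))) w"
  have ea: "sub (ext_transf n (t(k:=a))) w = sub (repl m a) ?y"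
    by (rule sub_split_fresh[OF assms(1,2) mn(1,2)])
  have eb: "sub (ext_transf n (t(k:=b))) w = sub (repl m b) ?y"
    by (rule sub_split_fresh[OF assms(1,2) mn(1,2)])
  have "d \<le> inf (diag a b) (sub (repl m a) ?y)"
    using assms(3) assms(4)[unfolded ea] by (rule le_infI)
  also have "\<dots> \<le> sub (repl m b) ?y" by (rule diag_repl_move[OF mn(3,4)])
  also have "\<dots> = sub (ext_transf n (t(k:=b))) w"
    using eb by simp
  finally show ?thesis .
qed

lemma cyl_coord_back:
  assumes "k < n" "d \<le> sub (ext_transf n (s(k:=u))) w"
  shows "d \<le> sub (ext_transf n s) (cyl {k} w)"
proof -
  have "sub (ext_transf n (s(k:=u))) w \<le> sub (ext_transf n (s(k:=u))) (cyl {k} w)"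
    by (rule sub_mono[OF ft_ext cyl_ext]) simp
  also have "\<dots> = sub (ext_transf n s) (cyl {k} w)"
    by (rule sub_agree[OF ft_ext ft_ext]) (auto simp: ext_upd[OF assms(1)])
  finally show ?thesis using assms(2) by (rule order_trans[rotated])
qed

lemma cyl_coord:
  assumes H3: "\<forall>x k. is_sum_in UNIV {sub (repl k l) x | l. True} (cyl {k} x)"
    and w: "w \<in> Nr n cyl" and k: "k < n" and d: "atom d" "d \<le> sub (ext_transf n s) (cyl {k} w)"
  shows "\<exists>l. d \<le> sub (ext_transf n (s(k:=l))) w"
proof -
  obtain m where m: "m \<notin> {..<n} \<union> s ` {..<n}"
    using fresh_nat[of "{..<n} \<union> s ` {..<n}"] by auto
  have mn: "m \<ge> n" "m \<notin> s ` {..<n}" "m \<noteq> k" using m k by auto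
  let ?\<sigma> = "ext_transf n s"
  let ?\<tau> = "?\<sigma>(k := m, m := k)"
  have ft\<tau>: "finite_transf ?\<tau>" by (intro ft_upd ft_ext)
  have pre: "?\<tau> -` {m} = {k}"
  proof
    show "?\<tau> -` {m} \<subseteq> {k}"
    proof
      fix i assume "i \<in> ?\<tau> -` {m}"
      then have "?\<tau> i = m" by simp
      then show "i \<in> {k}" using mn by (auto simp: ext_transf_def split: if_splits)
    qed
    show "{k} \<subseteq> ?\<tau> -` {m}" using mn by simp
  qed
  have "cyl {m} (sub ?\<tau> w) = sub ?\<tau> (cyl (?\<tau> -` {m}) w)"
    by (rule cyl_sub[OF ft\<tau>]) (auto simp: pre)
  also have "\<dots> = sub ?\<tau> (cyl {k} w)" using pre by simp
  also have "cyl {k} w = cyl {k, m} w"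
  proof -
    have "cyl {m} w = w" using w mn(1) unfolding Nr_def by blast
    then have "cyl ({k} \<union> {m}) w = cyl {k} w" using cyl_union[of "{k}" "{m}" w] by simp
    moreover have "{k} \<union> {m} = {k, m}" by auto
    ultimately show ?thesis by simp
  qed
  also have "sub ?\<tau> (cyl {k, m} w) = sub ?\<sigma> (cyl {k, m} w)"
    by (rule sub_agree[OF ft\<tau> ft_ext]) auto
  also have "cyl {k, m} w = cyl {k} w"
  proof -
    have "cyl {m} w = w" using w mn(1) unfolding Nr_def by blast
    then have "cyl ({k} \<union> {m}) w = cyl {k} w" using cyl_union[of "{k}" "{m}" w] by simp
    moreover have "{k} \<union> {m} = {k, m}" by auto
    ultimately show ?thesis by simp
  qed
  finally have eq: "cyl {m} (sub ?\<tau> w) = sub ?\<sigma> (cyl {k} w)" .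
  have "is_sum_in UNIV {sub (repl m l) (sub ?\<tau> w) | l. True} (cyl {m} (sub ?\<tau> w))" using H3 by blast
  moreover have "d \<le> cyl {m} (sub ?\<tau> w)" using d(2) eq by simp
  ultimately obtain y where "y \<in> {sub (repl m l) (sub ?\<tau> w) | l. True}" "d \<le> y"
    using atom_below_sum d(1) by blast
  then obtain l where l: "d \<le> sub (repl m l) (sub ?\<tau> w)" by blast
  have "sub (repl m l) (sub ?\<tau> w) = sub (repl m l \<circ> ?\<tau>) w" by (simp add: sub_comp ft_repl ft\<tau>)
  also have "\<dots> = sub (ext_transf n (s(k:=l))) w"
  proof (rule sub_Nr_agree[OF w ft_comp[OF ft_repl ft\<tau>] ft_ext])
    fix j assume "j < n"
    then show "(repl m l \<circ> ?\<tau>) j = ext_transf n (s(k := l)) j"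
      using mn by (auto simp: ext_transf_def repl_def)
  qed
  finally show ?thesis using l by auto
qed

end

context qea
begin

definition rep :: "'a \<Rightarrow> nat \<Rightarrow> nat" where
  "rep d k = (LEAST l. d \<le> diag k l)"

lemma E_refl: "d \<le> diag k k" by (simp add: diag_refl)

lemma E_sym: "d \<le> diag k l \<Longrightarrow> d \<le> diag l k"
  by (simp add: diag_sym_eq)

lemma E_trans: "d \<le> diag k l \<Longrightarrow> d \<le> diag l j \<Longrightarrow> d \<le> diag k j"
proof -
  assume "d \<le> diag k l" "d \<le> diag l j"
  then have "d \<le> inf (diag k l) (diag l j)" by (rule le_infI)
  then show "d \<le> diag k j" using diag_trans[of k l j] by (rule order_trans)
qed

lemma rep_E: "d \<le> diag k (rep d k)"
  unfolding rep_def by (rule LeastI[of _ k]) (rule E_refl)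

lemma rep_eq: assumes "d \<le> diag k l" shows "rep d k = rep d l"
proof -
  have "(\<lambda>l'. d \<le> diag k l') = (\<lambda>l'. d \<le> diag l l')"
    using assms by (auto intro: E_trans E_sym)
  then show ?thesis unfolding rep_def by simp
qed

lemma rep_idem: "rep d (rep d k) = rep d k"
  using rep_eq[OF E_sym[OF rep_E[of d k]]] by simp

lemma rep_inj: "rep d a = a \<Longrightarrow> rep d b = b \<Longrightarrow> d \<le> diag a b \<Longrightarrow> a = b"
proof -
  assume "rep d a = a" "rep d b = b" "d \<le> diag a b"
  then show "a = b" using rep_eq[of d a b] by simp
qed

end

locale qea_rep = qea cyl sub diag
  for cyl :: "nat set \<Rightarrow> 'a::boolean_algebra \<Rightarrow> 'a" and sub diag +
  fixes n :: nat and A :: "'a set"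
  assumes atomic: "atomic TYPE('a)"
    and H3: "\<forall>x k. is_sum_in UNIV {sub (repl k l) x | l. True} (cyl {k} x)"
    and SA: "subalg_Nr n cyl sub diag A"
    and CS: "complete_sub A"
begin

definition U :: "'a \<Rightarrow> nat set" where "U d = {k. rep d k = k}"
definition V where "V = Sigma {d. atom d} (\<lambda>i. PiE {..<n} (\<lambda>_. U i))"
definition f :: "'a \<Rightarrow> ('a \<times> (nat \<Rightarrow> nat)) set" where
  "f x = {(d, t). atom d \<and> t \<in> PiE {..<n} (\<lambda>_. U d) \<and> d \<le> sub (ext_transf n t) x}"

lemma A_Nr: "x \<in> A \<Longrightarrow> x \<in> Nr n cyl"
  using SA unfolding subalg_Nr_def by blast

lemma A_compl: "x \<in> A \<Longrightarrow> - x \<in> A"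
  using SA unfolding subalg_Nr_def by blast
lemma A_inf: "x \<in> A \<Longrightarrow> y \<in> A \<Longrightarrow> inf x y \<in> A"
  using SA unfolding subalg_Nr_def by blast
lemma A_top: "top \<in> A"
  using SA unfolding subalg_Nr_def by blast
lemma A_cyl: "\<Gamma> \<subseteq> {..<n} \<Longrightarrow> x \<in> A \<Longrightarrow> cyl \<Gamma> x \<in> A"
  using SA unfolding subalg_Nr_def by blast

lemma V_mem: "(d, t) \<in> V \<longleftrightarrow> atom d \<and> t \<in> PiE {..<n} (\<lambda>_. U d)"
  by (simp add: V_def)

lemma f_mem: "(d, t) \<in> f x \<longleftrightarrow> (d, t) \<in> V \<and> d \<le> sub (ext_transf n t) x"
  by (simp add: V_def f_def)

lemma f_V: "f x \<subseteq> V"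
  using f_mem by auto

lemma f_bot: "f bot = {}"
proof -
  have "\<not> (d, t) \<in> f bot" for d t
    using f_mem[of d t bot] sub_bot[OF ft_ext] unfolding V_mem atom_def by (auto simp: bot_unique)
  then show ?thesis by auto
qed

lemma f_top: "f top = V"
  using f_mem sub_top[OF ft_ext] by auto

lemma f_sup: "f (sup x y) = f x \<union> f y"
proof -
  have "(d, t) \<in> f (sup x y) \<longleftrightarrow> (d, t) \<in> f x \<union> f y" for d t
  proof -
    have "(d, t) \<in> f (sup x y) \<longleftrightarrow> (d, t) \<in> V \<and> (d \<le> sub (ext_transf n t) x \<or> d \<le> sub (ext_transf n t) y)"
      unfolding f_mem sub_sup[OF ft_ext] using atom_sup V_mem by blast
    then show ?thesis using f_mem by blast
  qed
  then show ?thesis by auto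
qed

lemma f_inf: "f (inf x y) = f x \<inter> f y"
proof -
  have "(d, t) \<in> f (inf x y) \<longleftrightarrow> (d, t) \<in> f x \<inter> f y" for d t
    using f_mem[of d t] sub_inf[OF ft_ext] by auto
  then show ?thesis by auto
qed

lemma f_compl: "f (- x) = V - f x"
proof -
  have "(d, t) \<in> f (- x) \<longleftrightarrow> (d, t) \<in> V - f x" for d t
  proof -
    have "(d, t) \<in> f (- x) \<longleftrightarrow> (d, t) \<in> V \<and> \<not> d \<le> sub (ext_transf n t) x"
      unfolding f_mem sub_compl[OF ft_ext] using atom_compl V_mem by blast
    then show ?thesis using f_mem by blast
  qed
  then show ?thesis by auto
qed

lemma f_mono: "x \<le> y \<Longrightarrow> f x \<subseteq> f y"
proof -
  assume "x \<le> y"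
  then have "inf x y = x" by (simp add: inf.absorb1)
  then have "f x = f x \<inter> f y" using f_inf[of x y] by simp
  then show "f x \<subseteq> f y" by blast
qed

lemma iter_rep:
  assumes z: "z \<in> Nr n cyl" and d: "d \<le> z"
  shows "d \<le> sub (ext_transf n (restrict (rep d) {..<n})) z"
proof -
  let ?u = "\<lambda>i j. if j < i then rep d j else j"
  have "i \<le> n \<Longrightarrow> d \<le> sub (ext_transf n (?u i)) z" for i
  proof (induction i)
    case 0
    have "ext_transf n (?u 0) = id" by (auto simp: ext_transf_def fun_eq_iff)
    then show ?case using d sub_id[of z] by (simp only:)
  next
    case (Suc i)
    then have i: "i < n" by simp
    have "?u i = (?u i)(i := i)" by (auto simp: fun_eq_iff)
    then have "d \<le> sub (ext_transf n ((?u i)(i := i))) z" using Suc by simp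
    then have "d \<le> sub (ext_transf n ((?u i)(i := rep d i))) z"
      by (rule diag_coord[OF z i rep_E])
    moreover have "(?u i)(i := rep d i) = ?u (Suc i)" by (auto simp: fun_eq_iff)
    ultimately show ?case by simp
  qed
  then have "d \<le> sub (ext_transf n (?u n)) z" by simp
  moreover have "ext_transf n (?u n) = ext_transf n (restrict (rep d) {..<n})"
    by (auto simp: ext_transf_def fun_eq_iff)
  ultimately show ?thesis by simp
qed

lemma rep_in_U: "rep d k \<in> U d"
  by (simp add: U_def rep_idem)

lemma f_neq: assumes "x \<in> A" "y \<in> A" "\<not> x \<le> y" shows "f x \<noteq> f y"
proof
  assume eq: "f x = f y"
  let ?z = "inf x (- y)"
  have zA: "?z \<in> A" using assms by (simp add: A_inf A_compl)
  have "?z \<noteq> bot" using assms(3) by (simp add: inf_shunt)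
  then obtain d where d: "atom d" "d \<le> ?z" using atomic unfolding atomic_def by blast
  let ?t = "restrict (rep d) {..<n}"
  have tV: "(d, ?t) \<in> V" using d(1) rep_in_U by (simp add: V_mem)
  have "d \<le> sub (ext_transf n ?t) ?z" by (rule iter_rep[OF A_Nr[OF zA] d(2)])
  then have "(d, ?t) \<in> f ?z" using tV f_mem by blast
  then have "(d, ?t) \<in> f x" "(d, ?t) \<notin> f y" using f_inf f_compl by auto
  then show False using eq by simp
qed

lemma f_inj: "inj_on f A"
proof (rule inj_onI)
  fix x y assume "x \<in> A" "y \<in> A" "f x = f y"
  have "x \<le> y"
  proof (rule ccontr)
    assume "\<not> x \<le> y" then have "f x \<noteq> f y" using f_neq \<open>x \<in> A\<close> \<open>y \<in> A\<close> by blast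
    then show False using \<open>f x = f y\<close> by simp
  qed
  moreover have "y \<le> x"
  proof (rule ccontr)
    assume "\<not> y \<le> x" then have "f y \<noteq> f x" using f_neq \<open>x \<in> A\<close> \<open>y \<in> A\<close> by blast
    then show False using \<open>f x = f y\<close> by simp
  qed
  ultimately show "x = y" by (rule antisym)
qed

lemma ext_comp:
  assumes "\<forall>j<n. \<tau> j < n"
  shows "ext_transf n s \<circ> ext_transf n \<tau> = ext_transf n (restrict (s \<circ> \<tau>) {..<n})"
  using assms by (auto simp: ext_transf_def fun_eq_iff)

lemma f_subst:
  assumes "\<forall>j<n. \<tau> j < n" "x \<in> A"
  shows "f (sub (ext_transf n \<tau>) x) = {(i, s) \<in> V. (i, restrict (s \<circ> \<tau>) {..<n}) \<in> f x}"
proof -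
  have "(d, s) \<in> f (sub (ext_transf n \<tau>) x) \<longleftrightarrow> (d, s) \<in> V \<and> (d, restrict (s \<circ> \<tau>) {..<n}) \<in> f x"
    for d s
  proof -
    have e: "sub (ext_transf n s) (sub (ext_transf n \<tau>) x) = sub (ext_transf n (restrict (s \<circ> \<tau>) {..<n})) x"
      using sub_comp[OF ft_ext ft_ext, of n s n \<tau> x] ext_comp[OF assms(1), of s] by simp
    have "(d, s) \<in> V \<Longrightarrow> (d, restrict (s \<circ> \<tau>) {..<n}) \<in> V"
      using assms(1) by (auto simp: V_mem PiE_iff)
    then show ?thesis using f_mem e by auto
  qed
  then show ?thesis by auto
qed

lemma f_diag:
  assumes "i < n" "j < n"
  shows "f (diag i j) = {(k, s) \<in> V. s i = s j}"
proof -
  have "(d, s) \<in> f (diag i j) \<longleftrightarrow> (d, s) \<in> V \<and> s i = s j" for d s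
  proof -
    have e: "sub (ext_transf n s) (diag i j) = diag (s i) (s j)"
      using sub_diag[OF ft_ext] assms by (simp add: ext_transf_def)
    have "(d, s) \<in> V \<Longrightarrow> d \<le> diag (s i) (s j) \<Longrightarrow> s i = s j"
    proof -
      assume "(d, s) \<in> V" "d \<le> diag (s i) (s j)"
      moreover have "s i \<in> U d" "s j \<in> U d" using \<open>(d, s) \<in> V\<close> assms by (auto simp: V_mem PiE_iff)
      ultimately show "s i = s j" using rep_inj unfolding U_def by blast
    qed
    then show ?thesis using f_mem e by (auto simp: diag_refl)
  qed
  then show ?thesis by auto
qed

lemma upd_PiE: "s \<in> PiE {..<n} (\<lambda>_. B) \<Longrightarrow> k < n \<Longrightarrow> u \<in> B \<Longrightarrow> s(k := u) \<in> PiE {..<n} (\<lambda>_. B)"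
  by (auto simp: PiE_iff extensional_def)

lemma f_cyl1:
  assumes w: "w \<in> A" and k: "k < n"
  shows "f (cyl {k} w) = {(d, s) \<in> V. \<exists>u \<in> U d. (d, s(k := u)) \<in> f w}"
proof -
  have "(d, s) \<in> f (cyl {k} w) \<longleftrightarrow> (d, s) \<in> V \<and> (\<exists>u \<in> U d. (d, s(k := u)) \<in> f w)" for d s
  proof
    assume H: "(d, s) \<in> f (cyl {k} w)"
    then have dV: "(d, s) \<in> V" and dl: "d \<le> sub (ext_transf n s) (cyl {k} w)" using f_mem by auto
    have ad: "atom d" using dV V_mem by blast
    obtain l where "d \<le> sub (ext_transf n (s(k:=l))) w"
      using cyl_coord[OF H3 A_Nr[OF w] k ad dl] by blast
    then have d2: "d \<le> sub (ext_transf n (s(k:=rep d l))) w"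
      by (rule diag_coord[OF A_Nr[OF w] k rep_E])
    have "(d, s(k := rep d l)) \<in> V" using dV k rep_in_U upd_PiE by (auto simp: V_mem)
    then have "(d, s(k := rep d l)) \<in> f w" using d2 f_mem by blast
    then show "(d, s) \<in> V \<and> (\<exists>u \<in> U d. (d, s(k := u)) \<in> f w)" using dV rep_in_U by blast
  next
    assume H: "(d, s) \<in> V \<and> (\<exists>u \<in> U d. (d, s(k := u)) \<in> f w)"
    then obtain u where "(d, s(k := u)) \<in> f w" by blast
    then have "d \<le> sub (ext_transf n (s(k:=u))) w" using f_mem by blast
    then have "d \<le> sub (ext_transf n s) (cyl {k} w)" by (rule cyl_coord_back[OF k])
    then show "(d, s) \<in> f (cyl {k} w)" using H f_mem by blast
  qed
  then show ?thesis by auto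
qed

lemma set_pair_eq: "(\<And>d s. (d, s) \<in> X \<longleftrightarrow> (d, s) \<in> Y) \<Longrightarrow> X = Y"
  by auto

lemma f_cyl:
  assumes "\<Gamma> \<subseteq> {..<n}" "x \<in> A"
  shows "f (cyl \<Gamma> x) = {(i, s) \<in> V. \<exists>t. (i, t) \<in> f x \<and> (\<forall>j<n. j \<notin> \<Gamma> \<longrightarrow> t j = s j)}"
proof -
  have fin: "finite \<Gamma>" using assms(1) finite_subset by blast
  show ?thesis using fin assms(1)
  proof (induction \<Gamma> rule: finite_induct)
    case empty
    have E0: "(d, s) \<in> f x \<longleftrightarrow> (d, s) \<in> V \<and> (\<exists>t. (d, t) \<in> f x \<and> (\<forall>j<n. t j = s j))" for d s
    proof
      assume "(d, s) \<in> f x" then show "(d, s) \<in> V \<and> (\<exists>t. (d, t) \<in> f x \<and> (\<forall>j<n. t j = s j))"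
        using f_V by blast
    next
      assume "(d, s) \<in> V \<and> (\<exists>t. (d, t) \<in> f x \<and> (\<forall>j<n. t j = s j))"
      then obtain t where t: "(d, t) \<in> f x" "\<forall>j<n. t j = s j" "(d, s) \<in> V" by blast
      have "(d, t) \<in> V" using t(1) f_V by blast
      then have "t = s" using t(2,3) by (intro PiE_ext[of t "{..<n}" "\<lambda>_. U d"]) (auto simp: V_mem)
      then show "(d, s) \<in> f x" using t(1) by simp
    qed
    show ?case
    proof (intro set_pair_eq)
      fix d s
      have M: "(d, s) \<in> {(i, s) \<in> V. \<exists>t. (i, t) \<in> f x \<and> (\<forall>j<n. j \<notin> {} \<longrightarrow> t j = s j)}
         \<longleftrightarrow> (d, s) \<in> V \<and> (\<exists>t. (d, t) \<in> f x \<and> (\<forall>j<n. t j = s j))" by simp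
      show "(d, s) \<in> f (cyl {} x) \<longleftrightarrow> (d, s) \<in> {(i, s) \<in> V. \<exists>t. (i, t) \<in> f x \<and> (\<forall>j<n. j \<notin> {} \<longrightarrow> t j = s j)}"
        unfolding cyl_empty M by (rule E0)
    qed
  next
    case (insert k \<Gamma>)
    have k: "k < n" and G: "\<Gamma> \<subseteq> {..<n}" using insert.prems by auto
    have wA: "cyl \<Gamma> x \<in> A" using A_cyl[OF G assms(2)] .
    have "cyl (insert k \<Gamma>) x = cyl {k} (cyl \<Gamma> x)"
      using cyl_union[of "{k}" \<Gamma> x] insert.hyps by simp
    then have e1: "f (cyl (insert k \<Gamma>) x) = {(d, s) \<in> V. \<exists>u \<in> U d. (d, s(k := u)) \<in> f (cyl \<Gamma> x)}"
      using f_cyl1[OF wA k] by simp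
    have e1m: "(d, s) \<in> f (cyl (insert k \<Gamma>) x) \<longleftrightarrow> (d, s) \<in> V \<and> (\<exists>u \<in> U d. (d, s(k := u)) \<in> f (cyl \<Gamma> x))"
      for d s using e1 by simp
    have IH: "f (cyl \<Gamma> x) = {(i, s) \<in> V. \<exists>t. (i, t) \<in> f x \<and> (\<forall>j<n. j \<notin> \<Gamma> \<longrightarrow> t j = s j)}"
      using insert.IH G by blast
    have IHm: "(d, s) \<in> f (cyl \<Gamma> x) \<longleftrightarrow> (d, s) \<in> V \<and> (\<exists>t. (d, t) \<in> f x \<and> (\<forall>j<n. j \<notin> \<Gamma> \<longrightarrow> t j = s j))"
      for d s using IH by simp
    have main: "(d, s) \<in> f (cyl (insert k \<Gamma>) x) \<longleftrightarrow>
          (d, s) \<in> V \<and> (\<exists>t. (d, t) \<in> f x \<and> (\<forall>j<n. j \<notin> insert k \<Gamma> \<longrightarrow> t j = s j))" for d s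
    proof
      assume "(d, s) \<in> f (cyl (insert k \<Gamma>) x)"
      then obtain u where u: "(d, s) \<in> V" "u \<in> U d" "(d, s(k := u)) \<in> f (cyl \<Gamma> x)"
        using e1m[of d s] by blast
      obtain t where t: "(d, t) \<in> f x" "\<forall>j<n. j \<notin> \<Gamma> \<longrightarrow> t j = (s(k := u)) j"
        using IHm[of d "s(k := u)"] u(3) by blast
      have "\<forall>j<n. j \<notin> insert k \<Gamma> \<longrightarrow> t j = s j" using t(2) by auto
      then show "(d, s) \<in> V \<and> (\<exists>t. (d, t) \<in> f x \<and> (\<forall>j<n. j \<notin> insert k \<Gamma> \<longrightarrow> t j = s j))"
        using u(1) t(1) by blast
    next
      assume H: "(d, s) \<in> V \<and> (\<exists>t. (d, t) \<in> f x \<and> (\<forall>j<n. j \<notin> insert k \<Gamma> \<longrightarrow> t j = s j))"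
      then obtain t where t: "(d, t) \<in> f x" "\<forall>j<n. j \<notin> insert k \<Gamma> \<longrightarrow> t j = s j" by blast
      have "(d, t) \<in> V" using t(1) f_V by blast
      then have u: "t k \<in> U d" using k by (auto simp: V_mem PiE_iff)
      have sV: "(d, s(k := t k)) \<in> V" using H u k upd_PiE by (auto simp: V_mem)
      have "\<forall>j<n. j \<notin> \<Gamma> \<longrightarrow> t j = (s(k := t k)) j" using t(2) by auto
      then have "(d, s(k := t k)) \<in> f (cyl \<Gamma> x)" using IHm[of d "s(k := t k)"] sV t(1) by blast
      then show "(d, s) \<in> f (cyl (insert k \<Gamma>) x)" using e1m[of d s] H u by blast
    qed
    show ?case by (intro set_pair_eq) (simp only: main mem_Collect_eq case_prod_conv)
  qed
qed

lemma sum_D: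
  assumes X: "X \<subseteq> A" and s: "is_sum_in A X s"
  shows "is_sum_in UNIV X s"
proof -
  have sA: "s \<in> A" using s unfolding is_sum_in_def by blast
  let ?Y = "insert (- s) X"
  have YA: "?Y \<subseteq> A" using X A_compl[OF sA] by blast
  have "is_sum_in A ?Y top"
    unfolding is_sum_in_def
  proof (intro conjI ballI impI)
    show "top \<in> A" by (rule A_top)
    show "y \<le> top" if "y \<in> ?Y" for y by simp
    fix u assume uA: "u \<in> A" and ub: "\<forall>y\<in>?Y. y \<le> u"
    then have "s \<le> u" using s unfolding is_sum_in_def by blast
    moreover have "- s \<le> u" using ub by blast
    ultimately have "sup s (- s) \<le> u" by (rule sup_least)
    then show "top \<le> u" by simp
  qed
  then have Y: "is_sum_in UNIV ?Y top" using CS YA unfolding complete_sub_def by blast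
  show ?thesis
    unfolding is_sum_in_def
  proof (intro conjI ballI impI)
    show "s \<in> UNIV" by simp
    show "x \<le> s" if "x \<in> X" for x using s that unfolding is_sum_in_def by blast
    fix v assume "\<forall>x\<in>X. x \<le> v"
    then have "\<forall>y\<in>?Y. y \<le> sup v (- s)" by (auto intro: le_supI1 le_supI2)
    then have "top \<le> sup v (- s)" using Y unfolding is_sum_in_def by blast
    then have "- sup v (- s) = bot" by (simp add: top_unique)
    then have "inf s (- v) = bot" by (simp add: inf_commute)
    then show "s \<le> v" by (simp add: inf_shunt)
  qed
qed

lemma f_sum:
  assumes X: "X \<subseteq> A" and s: "is_sum_in A X s"
  shows "f s = \<Union> (f ` X)"
proof
  have sU: "is_sum_in UNIV X s" by (rule sum_D[OF X s])
  show "f s \<subseteq> \<Union> (f ` X)"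
  proof
    fix p assume p: "p \<in> f s"
    obtain d t where pdt: "p = (d, t)" by (cases p)
    have dV: "(d, t) \<in> V" and dl: "d \<le> sub (ext_transf n t) s" using p pdt f_mem by auto
    have ad: "atom d" using dV V_mem by blast
    have "is_sum_in UNIV (sub (ext_transf n t) ` X) (sub (ext_transf n t) s)"
      using CA_sub[OF ft_ext] sU unfolding CA_def by blast
    then obtain y where "y \<in> sub (ext_transf n t) ` X" "d \<le> y"
      using atom_below_sum ad dl by blast
    then obtain x where "x \<in> X" "d \<le> sub (ext_transf n t) x" by blast
    then have "(d, t) \<in> f x" using dV f_mem by blast
    then show "p \<in> \<Union> (f ` X)" using pdt \<open>x \<in> X\<close> by blast
  qed
  show "\<Union> (f ` X) \<subseteq> f s"
    using s f_mono unfolding is_sum_in_def by blast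
qed

theorem rep_ok: "complete_representation n cyl sub diag A {d. atom d} U f"
  unfolding complete_representation_def Let_def V_def[symmetric]
  apply (intro conjI ballI allI impI)
            apply (rule f_inj)
           apply (rule f_V)
          apply (rule f_bot)
         apply (rule f_top)
        apply (rule f_sup)
       apply (rule f_inf)
      apply (rule f_compl)
     apply (erule (1) f_cyl)
    apply (erule (1) f_subst)
   apply (erule (1) f_diag)
  apply (erule (1) f_sum)
  done

end

theorem mainTheorem8:
  fixes n :: nat
    and cyl :: "nat set \<Rightarrow> 'a::boolean_algebra \<Rightarrow> 'a"
    and sub :: "(nat \<Rightarrow> nat) \<Rightarrow> 'a \<Rightarrow> 'a"
    and diag :: "nat \<Rightarrow> nat \<Rightarrow> 'a"
    and A :: "'a set"
  assumes "QEA_omega cyl sub diag"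
    and "atomic TYPE('a)"
    and "\<forall>x k. is_sum_in UNIV {sub (repl k l) x | l. True} (cyl {k} x)"
    and "subalg_Nr n cyl sub diag A"
    and "complete_sub A"
  shows "completely_representable n cyl sub diag A"
proof -
  interpret qea_rep cyl sub diag n A
    using assms by (simp add: qea_rep_def qea_rep_axioms_def qea_def)
  show ?thesis unfolding completely_representable_def using rep_ok by blast
qed

end
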